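(* Let $G$ be a group with identity $\varepsilon$ and $R$ a commutative ring with identity. Then the $R$-algebra homomorphism $\Psi:A\to C_R(Y)$ with $\Psi(P_E)=Q_E$ for every finite $E\subseteq G$ is an isomorphism of algebras, and for every $g\in G$ it restricts to an isomorphism $D_g\cong C_R(Y_g)$.
   Context: $A$ is the commutative $R$-algebra generated by symbols $P_E$, $E$ ranging over finite subsets of $G$, subject to $P_EP_F=P_{E\cup F}$; $P_\emptyset$ is its identity. For $g\in G$, $D_g=\operatorname{span}_R\{P_E: \varepsilon,g\in E\}$. $Y=\prod_{g\in G}\{0,1\}$ with the product topology (compact Hausdorff), elements written $x=(x_h)_{h\in G}$; $Y_\varepsilon=\{x: x_\varepsilon=1\}$ and $Y_g=\{x\in Y: x_\varepsilon=1=x_g\}$. $C_R(Y)$ is the $R$-algebra of locally constant functions $Y\to R$ (pointwise operations), and $C_R(Y_g)$ the ideal of those vanishing outside $Y_g$. $Q_g:Y\to R$ is the coordinate function $Q_g(x)=x_g$, and $Q_E=\prod_{g\in E}Q_g$ for finite $E$ ($Q_\emptyset=1$). *)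

theory Defs
  imports "HOL-Analysis.Analysis"
begin

text \<open>The algebra A: the commutative R-algebra presented by generators P_E (E a finite
subset of G) with relations P_E P_F = P_(E union F).  This is the semigroup algebra of the
semilattice of finite subsets of G under union; an element is a finite R-linear combination
of the P_E, represented by its coefficient function with finite support on finite sets.\<close>

definition supp :: "('g set \<Rightarrow> 'r::zero) \<Rightarrow> 'g set set" where
  "supp a = {E. a E \<noteq> 0}"

definition A_carrier :: "('g set \<Rightarrow> 'r::comm_ring_1) set" where
  "A_carrier = {a. finite (supp a) \<and> (\<forall>E \<in> supp a. finite E)}"

definition P :: "'g set \<Rightarrow> ('g set \<Rightarrow> 'r::comm_ring_1)" where
  "P E = (\<lambda>F. if F = E then 1 else 0)"

definition A_add :: "('g set \<Rightarrow> 'r::comm_ring_1) \<Rightarrow> ('g set \<Rightarrow> 'r) \<Rightarrow> ('g set \<Rightarrow> 'r)" where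
  "A_add a b = (\<lambda>E. a E + b E)"

definition A_smult :: "'r::comm_ring_1 \<Rightarrow> ('g set \<Rightarrow> 'r) \<Rightarrow> ('g set \<Rightarrow> 'r)" where
  "A_smult c a = (\<lambda>E. c * a E)"

definition A_mult :: "('g set \<Rightarrow> 'r::comm_ring_1) \<Rightarrow> ('g set \<Rightarrow> 'r) \<Rightarrow> ('g set \<Rightarrow> 'r)" where
  "A_mult a b = (\<lambda>H. \<Sum>(E, F) \<in> {(E, F). E \<in> supp a \<and> F \<in> supp b \<and> E \<union> F = H}. a E * b F)"

text \<open>D_g = span_R { P_E : epsilon, g in E }, with epsilon the group identity.\<close>
definition D :: "'g::group_add \<Rightarrow> ('g set \<Rightarrow> 'r::comm_ring_1) set" where
  "D g = {a \<in> A_carrier. \<forall>E \<in> supp a. 0 \<in> E \<and> g \<in> E}"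

text \<open>Y = prod_(g in G) {0,1}; a point x is a function G \<Rightarrow> bool (True = 1),
with the product of discrete topologies.\<close>
definition Ytop :: "('g \<Rightarrow> bool) topology" where
  "Ytop = product_topology (\<lambda>_. discrete_topology (UNIV :: bool set)) UNIV"

definition locally_constant :: "(('g \<Rightarrow> bool) \<Rightarrow> 'r) \<Rightarrow> bool" where
  "locally_constant f \<longleftrightarrow>
     (\<forall>x \<in> topspace Ytop. \<exists>U. openin Ytop U \<and> x \<in> U \<and> (\<forall>y \<in> U. f y = f x))"

definition C_Y :: "(('g \<Rightarrow> bool) \<Rightarrow> 'r) set" where
  "C_Y = {f. locally_constant f}"

text \<open>Y_g = {x : x_epsilon = 1 = x_g}; C_R(Y_g) = locally constant functions vanishing off Y_g.\<close>
definition Y_sub :: "'g::group_add \<Rightarrow> ('g \<Rightarrow> bool) set" where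
  "Y_sub g = {x. x 0 \<and> x g}"

definition C_Ysub :: "'g::group_add \<Rightarrow> (('g \<Rightarrow> bool) \<Rightarrow> 'r::zero) set" where
  "C_Ysub g = {f \<in> C_Y. \<forall>x. x \<notin> Y_sub g \<longrightarrow> f x = 0}"

definition Q1 :: "'g \<Rightarrow> ('g \<Rightarrow> bool) \<Rightarrow> 'r::comm_ring_1" where
  "Q1 g x = (if x g then 1 else 0)"

definition Q :: "'g set \<Rightarrow> ('g \<Rightarrow> bool) \<Rightarrow> 'r::comm_ring_1" where
  "Q E x = (\<Prod>g \<in> E. Q1 g x)"

definition Psi :: "('g set \<Rightarrow> 'r::comm_ring_1) \<Rightarrow> ('g \<Rightarrow> bool) \<Rightarrow> 'r" where
  "Psi a = (\<lambda>x. \<Sum>E \<in> supp a. a E * Q E x)"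

end

theory Submission
  imports Defs
begin


lemma top_Y: "topspace Ytop = UNIV"
  unfolding Ytop_def by (auto simp: PiE_def extensional_def)

lemma compact_Y: "compact_space Ytop"
  unfolding Ytop_def by (simp add: compact_space_product_topology compact_space_discrete_topology)

lemma open_cyl: "finite S \<Longrightarrow> openin Ytop {y. \<forall>i\<in>S. y i = x i}"
  unfolding Ytop_def openin_product_topology_alt
proof (intro ballI)
  fix z assume S: "finite S" and z: "z \<in> {y. \<forall>i\<in>S. y i = x i}"
  define U where "U = (\<lambda>i. if i \<in> S then {x i} else UNIV)"
  have "{i \<in> UNIV. U i \<noteq> topspace (discrete_topology UNIV)} \<subseteq> S" by (auto simp: U_def)
  hence "finite {i \<in> UNIV. U i \<noteq> topspace (discrete_topology UNIV)}" using S finite_subset by blast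
  moreover have "Pi\<^sub>E UNIV U = {y. \<forall>i\<in>S. y i = x i}" by (auto simp: U_def PiE_def extensional_def Pi_def; metis singletonD singletonI)
  ultimately show "\<exists>U. finite {i \<in> UNIV. U i \<noteq> topspace (discrete_topology UNIV)} \<and>
             (\<forall>i\<in>UNIV. openin (discrete_topology UNIV) (U i)) \<and> z \<in> Pi\<^sub>E UNIV U \<and> Pi\<^sub>E UNIV U \<subseteq> {y. \<forall>i\<in>S. y i = x i}"
    using z by (intro exI[of _ U]) auto
qed

lemma lc_iff: "locally_constant (f :: ('g \<Rightarrow> bool) \<Rightarrow> 'r) \<longleftrightarrow> (\<exists>S. finite S \<and> (\<forall>x y. (\<forall>i\<in>S. x i = y i) \<longrightarrow> f x = f y))"
proof
  assume "\<exists>S. finite S \<and> (\<forall>x y. (\<forall>i\<in>S. x i = y i) \<longrightarrow> f x = f y)"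
  then obtain S where S: "finite S" "\<And>x y. (\<forall>i\<in>S. x i = y i) \<Longrightarrow> f x = f y" by blast
  show "locally_constant f" unfolding locally_constant_def
  proof
    fix x :: "'g \<Rightarrow> bool"
    show "\<exists>U. openin Ytop U \<and> x \<in> U \<and> (\<forall>y\<in>U. f y = f x)"
      by (rule exI[of _ "{y. \<forall>i\<in>S. y i = x i}"]) (use S open_cyl in auto)
  qed
next
  assume lc: "locally_constant f"
  have "\<forall>x. \<exists>F. finite F \<and> (\<forall>y. (\<forall>i\<in>F. y i = x i) \<longrightarrow> f y = f x)"
  proof
    fix x :: "'g \<Rightarrow> bool"
    obtain U where U: "openin Ytop U" "x \<in> U" "\<forall>y\<in>U. f y = f x"
      using lc top_Y unfolding locally_constant_def by blast
    then obtain V where V: "finite {i \<in> UNIV. V i \<noteq> topspace (discrete_topology (UNIV::bool set))}"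
       "x \<in> Pi\<^sub>E UNIV V" "Pi\<^sub>E UNIV V \<subseteq> U"
      unfolding Ytop_def openin_product_topology_alt by blast
    let ?F = "{i \<in> UNIV. V i \<noteq> topspace (discrete_topology (UNIV::bool set))}"
    have "f y = f x" if "\<forall>i\<in>?F. y i = x i" for y
    proof -
      have "y i \<in> V i" for i
      proof (cases "V i = UNIV")
        case False thus ?thesis using that V(2) by (auto simp: PiE_def)
      qed auto
      hence "y \<in> Pi\<^sub>E UNIV V" by (auto simp: PiE_def)
      thus ?thesis using V(3) U(3) by blast
    qed
    thus "\<exists>F. finite F \<and> (\<forall>y. (\<forall>i\<in>F. y i = x i) \<longrightarrow> f y = f x)" using V(1) by blast
  qed
  then obtain Fx where Fx: "\<And>x. finite (Fx x)" "\<And>x y. (\<forall>i\<in>Fx x. y i = x i) \<Longrightarrow> f y = f x"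
    by metis
  define B where "B x = {y. \<forall>i\<in>Fx x. y i = x i}" for x
  have "compactin Ytop (topspace Ytop)" using compact_Y compact_space_def by blast
  moreover have "\<forall>b\<in>range B. openin Ytop b" using open_cyl Fx(1) B_def by auto
  moreover have "topspace Ytop \<subseteq> \<Union>(range B)" by (auto simp: B_def)
  ultimately obtain FF where FF: "finite FF" "FF \<subseteq> range B" "topspace Ytop \<subseteq> \<Union>FF"
    unfolding compactin_def by meson
  then obtain X0 where X0: "finite X0" "FF = B ` X0" by (meson finite_subset_image)
  show "\<exists>S. finite S \<and> (\<forall>x y. (\<forall>i\<in>S. x i = y i) \<longrightarrow> f x = f y)"
  proof (intro exI conjI allI impI)
    show "finite (\<Union>(Fx ` X0))" using X0 Fx(1) by auto
    fix x y :: "'g \<Rightarrow> bool" assume xy: "\<forall>i\<in>\<Union>(Fx ` X0). x i = y i"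
    obtain z where z: "z \<in> X0" "x \<in> B z" using FF(3) X0(2) top_Y by auto
    have "y \<in> B z" using z xy by (auto simp: B_def)
    thus "f x = f y" using z Fx(2) by (auto simp: B_def)
  qed
qed


lemma Psi_sum: "finite T \<Longrightarrow> supp a \<subseteq> T \<Longrightarrow> Psi a x = (\<Sum>E\<in>T. a E * Q E x)"
  unfolding Psi_def by (rule sum.mono_neutral_left) (auto simp: supp_def)

lemma Q_eq: "finite E \<Longrightarrow> Q E x = (if E \<subseteq> {g. x g} then 1 else 0)"
  unfolding Q_def Q1_def by (induction E rule: finite_induct) auto

lemma Q_Un: "finite E \<Longrightarrow> finite F \<Longrightarrow> Q (E \<union> F) x = Q E x * Q F x"
  by (simp add: Q_eq)

lemma carrier_fin: "a \<in> A_carrier \<Longrightarrow> finite (supp a)" by (simp add: A_carrier_def)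
lemma carrier_finE: "a \<in> A_carrier \<Longrightarrow> E \<in> supp a \<Longrightarrow> finite E" by (simp add: A_carrier_def)

lemma supp_add: "supp (A_add a b) \<subseteq> supp a \<union> supp b" by (auto simp: supp_def A_add_def)
lemma supp_smult: "supp (A_smult c a) \<subseteq> supp a" by (auto simp: supp_def A_smult_def)
lemma supp_P: "supp (P E) \<subseteq> {E}" by (auto simp: supp_def P_def)

lemma supp_mult: "finite (supp a) \<Longrightarrow> finite (supp b) \<Longrightarrow>
   supp (A_mult a b) \<subseteq> (\<lambda>(E,F). E \<union> F) ` (supp a \<times> supp b)"
proof
  fix H assume "H \<in> supp (A_mult a b)"
  have "{(E, F). E \<in> supp a \<and> F \<in> supp b \<and> E \<union> F = H} \<noteq> {}"
  proof
    assume "{(E, F). E \<in> supp a \<and> F \<in> supp b \<and> E \<union> F = H} = {}"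
    hence "A_mult a b H = 0" unfolding A_mult_def by (simp only: sum.empty)
    thus False using \<open>H \<in> supp (A_mult a b)\<close> by (simp add: supp_def)
  qed
  thus "H \<in> (\<lambda>(E,F). E \<union> F) ` (supp a \<times> supp b)" by auto
qed

lemma add_carrier: "a \<in> A_carrier \<Longrightarrow> b \<in> A_carrier \<Longrightarrow> A_add a b \<in> A_carrier"
proof -
  assume a: "a \<in> A_carrier" and b: "b \<in> A_carrier"
  have "finite (supp a \<union> supp b)" using a b carrier_fin by blast
  hence "finite (supp (A_add a b))" using supp_add finite_subset by blast
  moreover have "\<forall>E\<in>supp (A_add a b). finite E" using supp_add a b carrier_finE by blast
  ultimately show ?thesis unfolding A_carrier_def by blast
qed
lemma smult_carrier: "a \<in> A_carrier \<Longrightarrow> A_smult c a \<in> A_carrier"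
proof -
  assume a: "a \<in> A_carrier"
  have "finite (supp (A_smult c a))" using supp_smult carrier_fin[OF a] finite_subset by blast
  moreover have "\<forall>E\<in>supp (A_smult c a). finite E" using supp_smult a carrier_finE by blast
  ultimately show ?thesis unfolding A_carrier_def by blast
qed
lemma P_carrier: "finite E \<Longrightarrow> P E \<in> A_carrier"
proof -
  assume E: "finite E"
  have "finite (supp (P E))" using supp_P finite_subset by blast
  moreover have "\<forall>F\<in>supp (P E). finite F" using supp_P E by blast
  ultimately show ?thesis unfolding A_carrier_def by blast
qed
lemma mult_carrier: "a \<in> A_carrier \<Longrightarrow> b \<in> A_carrier \<Longrightarrow> A_mult a b \<in> A_carrier"
proof -
  assume a: "a \<in> A_carrier" and b: "b \<in> A_carrier"
  have s: "supp (A_mult a b) \<subseteq> (\<lambda>(E,F). E \<union> F) ` (supp a \<times> supp b)"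
    by (rule supp_mult[OF carrier_fin[OF a] carrier_fin[OF b]])
  show ?thesis unfolding A_carrier_def
  proof (intro CollectI conjI ballI)
    have "finite (supp a \<times> supp b)" using a b carrier_fin by blast
    thus "finite (supp (A_mult a b))" using s finite_subset by blast
    fix H assume "H \<in> supp (A_mult a b)"
    then obtain E F where "E \<in> supp a" "F \<in> supp b" "H = E \<union> F" using s by auto
    thus "finite H" using carrier_finE[OF a] carrier_finE[OF b] by blast
  qed
qed

lemma Psi_add: "a \<in> A_carrier \<Longrightarrow> b \<in> A_carrier \<Longrightarrow> Psi (A_add a b) x = Psi a x + Psi b x"
proof -
  assume a: "a \<in> A_carrier" and b: "b \<in> A_carrier"
  let ?T = "supp a \<union> supp b"
  have f: "finite ?T" using a b carrier_fin by blast
  show ?thesis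
    using Psi_sum[of "supp a \<union> supp b" "A_add a b" x, OF f supp_add] Psi_sum[OF f, of a x] Psi_sum[OF f, of b x]
    by (simp add: A_add_def sum.distrib distrib_right)
qed

lemma Psi_smult: "a \<in> A_carrier \<Longrightarrow> Psi (A_smult c a) x = c * Psi a x"
proof -
  assume a: "a \<in> A_carrier"
  have f: "finite (supp a)" using a carrier_fin by blast
  show ?thesis
    using Psi_sum[of "supp a" "A_smult c a" x, OF f supp_smult] Psi_sum[OF f, of a x]
    by (simp add: A_smult_def sum_distrib_left mult.assoc)
qed

lemma Psi_P: "Psi (P E) = Q E"
proof
  fix x show "Psi (P E) x = Q E x"
    using Psi_sum[of "{E}" "P E" x, OF _ supp_P] by (simp add: P_def)
qed

lemma Psi_mult: "a \<in> A_carrier \<Longrightarrow> b \<in> A_carrier \<Longrightarrow> Psi (A_mult a b) x = Psi a x * Psi b x"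
proof -
  assume a: "a \<in> A_carrier" and b: "b \<in> A_carrier"
  let ?S = "supp a \<times> supp b"
  let ?u = "\<lambda>(E::'a set,F). E \<union> F"
  let ?T = "?u ` ?S"
  have fS: "finite ?S" using a b carrier_fin by blast
  hence fT: "finite ?T" by blast
  have "Psi (A_mult a b) x = (\<Sum>H\<in>?T. A_mult a b H * Q H x)"
    using Psi_sum[OF fT supp_mult] a b carrier_fin by blast
  also have "\<dots> = (\<Sum>H\<in>?T. \<Sum>p\<in>{p. p \<in> ?S \<and> ?u p = H}. a (fst p) * b (snd p) * Q H x)"
  proof (rule sum.cong[OF refl])
    fix H
    have e: "{(E, F). E \<in> supp a \<and> F \<in> supp b \<and> E \<union> F = H} = {p. p \<in> ?S \<and> ?u p = H}" by auto
    show "A_mult a b H * Q H x = (\<Sum>p\<in>{p. p \<in> ?S \<and> ?u p = H}. a (fst p) * b (snd p) * Q H x)"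
      unfolding A_mult_def e sum_distrib_right by (rule sum.cong) auto
  qed
  also have "\<dots> = (\<Sum>H\<in>?T. \<Sum>p\<in>{p. p \<in> ?S \<and> ?u p = H}. a (fst p) * b (snd p) * Q (?u p) x)"
    by (intro sum.cong refl) auto
  also have "\<dots> = (\<Sum>p\<in>?S. a (fst p) * b (snd p) * Q (?u p) x)"
    by (rule sum.group[OF fS fT]) auto
  also have "\<dots> = (\<Sum>p\<in>?S. (a (fst p) * Q (fst p) x) * (b (snd p) * Q (snd p) x))"
  proof (rule sum.cong[OF refl])
    fix p assume "p \<in> ?S"
    hence "finite (fst p)" "finite (snd p)" using a b carrier_finE by (auto simp: mem_Times_iff)
    thus "a (fst p) * b (snd p) * Q (?u p) x = (a (fst p) * Q (fst p) x) * (b (snd p) * Q (snd p) x)"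
      by (simp add: Q_Un split_beta ac_simps)
  qed
  also have "\<dots> = Psi a x * Psi b x"
    unfolding Psi_def sum_product sum.cartesian_product by (simp add: split_beta)
  finally show ?thesis .
qed

lemma Psi_zero: assumes c: "c \<in> A_carrier" and z: "\<forall>x. Psi c x = 0" shows "c = (\<lambda>_. 0)"
proof (rule ccontr)
  assume "c \<noteq> (\<lambda>_. 0)"
  hence ne: "supp c \<noteq> {}" by (auto simp: supp_def)
  obtain E where E: "E \<in> supp c" "\<forall>F\<in>supp c. F \<le> E \<longrightarrow> E = F"
    using finite_has_minimal[OF carrier_fin[OF c] ne] by blast
  let ?x = "\<lambda>g. g \<in> E"
  have "Psi c ?x = (\<Sum>F\<in>supp c. c F * Q F ?x)" by (simp add: Psi_def)
  also have "\<dots> = c E * Q E ?x"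
  proof (rule sum.remove[OF carrier_fin[OF c] E(1), THEN trans], simp, rule sum.neutral, rule ballI)
    fix F assume F: "F \<in> supp c - {E}"
    hence "finite F" using c carrier_finE by blast
    moreover have "\<not> F \<subseteq> E" using F E(2) by auto
    ultimately show "c F * Q F ?x = 0" by (simp add: Q_eq)
  qed
  also have "\<dots> = c E" using carrier_finE[OF c E(1)] by (simp add: Q_eq)
  finally show False using z E(1) by (simp add: supp_def)
qed

lemma Psi_inj: "inj_on Psi A_carrier"
proof (rule inj_onI)
  fix a b assume a: "a \<in> A_carrier" and b: "b \<in> A_carrier" and e: "Psi a = Psi b"
  let ?c = "A_add a (A_smult (-1) b)"
  have "?c \<in> A_carrier" using a b add_carrier smult_carrier by blast
  moreover have "\<forall>x. Psi ?c x = 0" using Psi_add[OF a smult_carrier[OF b]] Psi_smult[OF b] e by simp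
  ultimately have "?c = (\<lambda>_. 0)" by (rule Psi_zero)
  thus "a = b" proof -
    have "a E - b E = 0" for E using \<open>?c = (\<lambda>_. 0)\<close> by (simp add: A_add_def A_smult_def fun_eq_iff)
    thus ?thesis by (auto simp: fun_eq_iff)
  qed
qed


lemma Psi_lc: assumes a: "a \<in> A_carrier" shows "Psi a \<in> C_Y"
proof -
  have "\<exists>S. finite S \<and> (\<forall>x y. (\<forall>i\<in>S. x i = y i) \<longrightarrow> Psi a x = Psi a y)"
  proof (intro exI conjI allI impI)
    show "finite (\<Union>(supp a))" using carrier_fin[OF a] carrier_finE[OF a] by blast
    fix x y :: "'a \<Rightarrow> bool" assume xy: "\<forall>i\<in>\<Union>(supp a). x i = y i"
    have QQ: "Q E x = Q E y" if "E \<in> supp a" for E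
      unfolding Q_def Q1_def using xy that by (intro prod.cong) auto
    thus "Psi a x = Psi a y" unfolding Psi_def by (intro sum.cong refl) (simp add: QQ)
  qed
  thus ?thesis unfolding C_Y_def lc_iff by blast
qed

lemma Q_empty: "Q {} x = 1" by (simp add: Q_def)

lemma Q_single: "Q {s} x = (if x s then 1 else 0)" by (simp add: Q_def Q1_def)

lemma surj_aux: "finite S \<Longrightarrow> \<forall>f::('a \<Rightarrow> bool) \<Rightarrow> 'r::comm_ring_1. (\<forall>x y. (\<forall>i\<in>S. x i = y i) \<longrightarrow> f x = f y) \<longrightarrow> (\<exists>a\<in>A_carrier. Psi a = f)"
proof (induction S rule: finite_induct)
  case empty
  show ?case
  proof (intro allI impI)
    fix f :: "('a \<Rightarrow> bool) \<Rightarrow> 'r" assume "\<forall>x y. (\<forall>i\<in>{}. x i = y i) \<longrightarrow> f x = f y"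
    hence c: "f x = f y" for x y by blast
    let ?a = "A_smult (f (\<lambda>_. False)) (P {})"
    have "?a \<in> A_carrier" using smult_carrier P_carrier by blast
    moreover have "Psi ?a = f"
    proof
      fix x :: "'a \<Rightarrow> bool" have pe: "Psi (P {} :: 'a set \<Rightarrow> 'r) x = 1" by (simp add: Psi_P Q_empty)
      show "Psi ?a x = f x"
        using Psi_smult[OF P_carrier[of "{}"], of "f (\<lambda>_. False)" x] Psi_P[of "{}"] c[of x "\<lambda>_. False"] pe
        by simp
    qed
    ultimately show "\<exists>a\<in>A_carrier. Psi a = f" by blast
  qed
next
  case (insert s S)
  show ?case
  proof (intro allI impI)
    fix f :: "('a \<Rightarrow> bool) \<Rightarrow> 'r" assume hf: "\<forall>x y. (\<forall>i\<in>insert s S. x i = y i) \<longrightarrow> f x = f y"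
    have dep: "\<forall>x y. (\<forall>i\<in>S. x i = y i) \<longrightarrow> (\<lambda>x. f (x(s:=b))) x = (\<lambda>x. f (x(s:=b))) y" for b
    proof (intro allI impI)
      fix x y :: "'a \<Rightarrow> bool" assume "\<forall>i\<in>S. x i = y i"
      hence "\<forall>i\<in>insert s S. (x(s:=b)) i = (y(s:=b)) i" by simp
      thus "(\<lambda>x. f (x(s:=b))) x = (\<lambda>x. f (x(s:=b))) y" using hf by blast
    qed
    obtain a1 where a1: "a1 \<in> A_carrier" "Psi a1 = (\<lambda>x. f (x(s:=True)))"
      using mp[OF spec[OF insert.IH, of "\<lambda>x. f (x(s:=True))"] dep[of True]] by blast
    obtain a0 where a0: "a0 \<in> A_carrier" "Psi a0 = (\<lambda>x. f (x(s:=False)))"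
      using mp[OF spec[OF insert.IH, of "\<lambda>x. f (x(s:=False))"] dep[of False]] by blast
    have Ps: "P {s} \<in> A_carrier" and P0: "P {} \<in> A_carrier" using P_carrier by auto
    let ?n = "A_add (P {}) (A_smult (-1) (P {s}))"
    have n: "?n \<in> A_carrier" using add_carrier smult_carrier Ps P0 by blast
    let ?a = "A_add (A_mult (P {s}) a1) (A_mult ?n a0)"
    have "?a \<in> A_carrier" using add_carrier mult_carrier Ps n a1 a0 by blast
    moreover have "Psi ?a = f"
    proof
      fix x :: "'a \<Rightarrow> bool"
      have nv: "Psi ?n x = 1 - Q {s} x"
      proof -
        have "Psi ?n x = Psi (P {}) x + Psi (A_smult (-1) (P {s})) x"
          by (rule Psi_add[OF P0 smult_carrier[OF Ps]])
        also have "\<dots> = 1 - Q {s} x" by (simp add: Psi_smult[OF Ps] Psi_P Q_empty)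
        finally show ?thesis .
      qed
      have "Psi ?a x = Psi (A_mult (P {s}) a1) x + Psi (A_mult ?n a0) x"
        by (rule Psi_add[OF mult_carrier[OF Ps a1(1)] mult_carrier[OF n a0(1)]])
      also have "\<dots> = Q {s} x * f (x(s:=True)) + (1 - Q {s} x) * f (x(s:=False))"
        by (simp add: Psi_mult[OF Ps a1(1)] Psi_mult[OF n a0(1)] nv a1(2) a0(2) Psi_P)
      also have "\<dots> = f x"
      proof (cases "x s")
        case True
        hence "x(s:=True) = x" by (simp add: fun_upd_idem)
        thus ?thesis using True by (simp add: Q_single)
      next
        case False
        hence "x(s:=False) = x" by (simp add: fun_upd_idem)
        thus ?thesis using False by (simp add: Q_single)
      qed
      finally show "Psi ?a x = f x" .
    qed
    ultimately show "\<exists>a\<in>A_carrier. Psi a = f" by blast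
  qed
qed

lemma Psi_bij: "bij_betw Psi (A_carrier :: ('g set \<Rightarrow> 'r::comm_ring_1) set) C_Y"
  unfolding bij_betw_def
proof (intro conjI Psi_inj equalityI subsetI)
  fix f assume "f \<in> Psi ` (A_carrier :: ('g set \<Rightarrow> 'r) set)"
  thus "f \<in> C_Y" using Psi_lc by blast
next
  fix f :: "('g \<Rightarrow> bool) \<Rightarrow> 'r" assume "f \<in> C_Y"
  then obtain S where "finite S" "\<forall>x y. (\<forall>i\<in>S. x i = y i) \<longrightarrow> f x = f y"
    unfolding C_Y_def lc_iff by blast
  then obtain a where "a \<in> A_carrier" "Psi a = f" using surj_aux by blast
  thus "f \<in> Psi ` A_carrier" by blast
qed

lemma D_sub: "D g \<subseteq> A_carrier" by (auto simp: D_def)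

lemma Psi_D_bij: "bij_betw Psi (D g :: ('g::group_add set \<Rightarrow> 'r::comm_ring_1) set) (C_Ysub g)"
  unfolding bij_betw_def
proof (intro conjI equalityI subsetI)
  show "inj_on Psi (D g :: ('g set \<Rightarrow> 'r) set)" using Psi_inj D_sub inj_on_subset by blast
next
  fix f assume "f \<in> Psi ` (D g :: ('g set \<Rightarrow> 'r) set)"
  then obtain a where a: "a \<in> D g" "f = Psi a" by blast
  have ac: "a \<in> A_carrier" using a D_sub by blast
  have "Psi a x = 0" if "x \<notin> Y_sub g" for x
    unfolding Psi_def
  proof (rule sum.neutral, rule ballI)
    fix E assume E: "E \<in> supp a"
    have "0 \<in> E \<and> g \<in> E" using a(1) E unfolding D_def by blast
    hence "0 \<in> E" "g \<in> E" by blast+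
    have "finite E" using carrier_finE[OF ac E] .
    have "\<not> E \<subseteq> {h. x h}" using that \<open>0 \<in> E\<close> \<open>g \<in> E\<close> unfolding Y_sub_def by blast
    thus "a E * Q E x = 0" using \<open>finite E\<close> by (simp add: Q_eq)
  qed
  thus "f \<in> C_Ysub g" using Psi_lc[OF ac] a(2) by (simp add: C_Ysub_def)
next
  fix f :: "('g \<Rightarrow> bool) \<Rightarrow> 'r" assume f: "f \<in> C_Ysub g"
  hence "f \<in> C_Y" by (simp add: C_Ysub_def)
  hence "f \<in> Psi ` A_carrier" using Psi_bij[where 'g='g and 'r='r] unfolding bij_betw_def by simp
  then obtain a where a: "a \<in> A_carrier" "Psi a = f" by blast
  have Pg: "(P {0, g} :: 'g set \<Rightarrow> 'r) \<in> A_carrier" by (rule P_carrier) simp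
  let ?a = "A_mult a (P {0,g})"
  have ac: "?a \<in> A_carrier" using mult_carrier[OF a(1) Pg] .
  have "\<forall>H\<in>supp ?a. 0 \<in> H \<and> g \<in> H"
  proof
    fix H assume "H \<in> supp ?a"
    with supp_mult[OF carrier_fin[OF a(1)] carrier_fin[OF Pg]] have "H \<in> (\<lambda>(E,F). E \<union> F) ` (supp a \<times> supp (P {0,g} :: 'g set \<Rightarrow> 'r))"
      by (rule subsetD)
    then obtain E F where EF: "F \<in> supp (P {0,g} :: 'g set \<Rightarrow> 'r)" "H = E \<union> F" by auto
    have "F \<in> {{0,g}}" using supp_P[of "{0,g}"] EF(1) by (rule subsetD)
    hence "F = {0,g}" by simp
    thus "0 \<in> H \<and> g \<in> H" using EF(2) by simp
  qed
  hence "?a \<in> D g" using ac by (simp add: D_def)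
  moreover have "Psi ?a = f"
  proof
    fix x
    have "Psi ?a x = f x * Q {0,g} x" using Psi_mult[OF a(1) Pg] a(2) by (simp add: Psi_P)
    also have "\<dots> = f x"
    proof (cases "x \<in> Y_sub g")
      case True thus ?thesis by (simp add: Q_eq Y_sub_def)
    next
      case False thus ?thesis using f by (simp add: C_Ysub_def)
    qed
    finally show "Psi ?a x = f x" .
  qed
  ultimately show "f \<in> Psi ` D g" by blast
qed

theorem mainTheorem12:
  shows "(\<forall>E::'g::group_add set. finite E \<longrightarrow> Psi (P E :: 'g set \<Rightarrow> 'r::comm_ring_1) = Q E)
    \<and> (\<forall>a \<in> (A_carrier :: ('g set \<Rightarrow> 'r::comm_ring_1) set). \<forall>b \<in> A_carrier.
          Psi (A_add a b) = (\<lambda>x. Psi a x + Psi b x)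
        \<and> Psi (A_mult a b) = (\<lambda>x. Psi a x * Psi b x))
    \<and> (\<forall>c::'r. \<forall>a \<in> (A_carrier :: ('g set \<Rightarrow> 'r::comm_ring_1) set). Psi (A_smult c a) = (\<lambda>x. c * Psi a x))
    \<and> Psi (P {} :: 'g set \<Rightarrow> 'r::comm_ring_1) = (\<lambda>x. 1)
    \<and> bij_betw Psi (A_carrier :: ('g set \<Rightarrow> 'r::comm_ring_1) set) C_Y
    \<and> (\<forall>g::'g. bij_betw Psi (D g :: ('g set \<Rightarrow> 'r::comm_ring_1) set) (C_Ysub g))"
proof (intro conjI allI impI ballI)
  show "Psi (P E :: 'g set \<Rightarrow> 'r) = Q E" for E by (rule Psi_P)
  show "Psi (A_add a b) = (\<lambda>x. Psi a x + Psi b x)" if "a \<in> A_carrier" "b \<in> A_carrier" for a b :: "'g set \<Rightarrow> 'r"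
    using Psi_add[OF that] by (simp add: fun_eq_iff)
  show "Psi (A_mult a b) = (\<lambda>x. Psi a x * Psi b x)" if "a \<in> A_carrier" "b \<in> A_carrier" for a b :: "'g set \<Rightarrow> 'r"
    using Psi_mult[OF that] by (simp add: fun_eq_iff)
  show "Psi (A_smult c a) = (\<lambda>x. c * Psi a x)" if "a \<in> A_carrier" for c and a :: "'g set \<Rightarrow> 'r"
    using Psi_smult[OF that] by (simp add: fun_eq_iff)
  show "Psi (P {} :: 'g set \<Rightarrow> 'r) = (\<lambda>x. 1)" by (simp add: Psi_P fun_eq_iff Q_empty)
  show "bij_betw Psi (A_carrier :: ('g set \<Rightarrow> 'r) set) C_Y" by (rule Psi_bij)
  show "bij_betw Psi (D g :: ('g set \<Rightarrow> 'r) set) (C_Ysub g)" for g by (rule Psi_D_bij)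
qed

end
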